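(* Let $A$ be a $d\times n$ integer matrix with columns $\underline a_1,\dots,\underline a_n$, put $\underline a_0=0$, and let $\widetilde A$ be the $(d+1)\times(n+1)$ matrix with columns $(1,\underline a_i)$, $i=0,\dots,n$. Assume $\mathbb{Z}\widetilde A=\mathbb{Z}^{d+1}$, $\mathbb{N}\widetilde A=\mathbb{Z}^{d+1}\cap\mathbb{R}_{\geq0}\widetilde A$, and $\mathrm{int}(\mathbb{N}\widetilde A)=\mathbb{N}\widetilde A+\widetilde c$ for some $\widetilde c\in\mathbb{N}\widetilde A$. For $u\in\{0,\dots,n\}$ let $A_u$ be the $d\times n$ matrix with columns $\underline a_i-\underline a_u$, $i\in\{0,\dots,n\}\setminus\{u\}$. Then (1) $\mathbb{Z}A_u=\mathbb{Z}^d$; (2) $\mathbb{N}A_u=\mathbb{Z}^d\cap\mathbb{R}_{\geq0}A_u$; (3) $\mathrm{int}(\mathbb{N}A_u)=\mathbb{N}A_u+c$ for some $c\in\mathbb{N}A_u$.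
   Context: For an integer matrix $M$ with $m$ rows, $\mathbb{Z}M$, $\mathbb{N}M$, $\mathbb{R}_{\ge0}M$ denote the group, semigroup and real cone generated by its columns, and $\mathrm{int}(\mathbb{N}M)=\mathbb{Z}^m\cap(\mathbb{R}_{\geq0}M)^\circ$ with $(\cdot)^\circ$ the topological interior. *)

theory Defs
  imports "HOL-Analysis.Analysis"
begin

text \<open>A matrix with m rows is represented by the (finite) set S of its columns,
  each column an integer vector of type int^'m.  The generated group, semigroup
  and real cone only depend on this set.\<close>

definition rvec :: "int^'m \<Rightarrow> real^'m" where
  "rvec z = (\<chi> j. real_of_int (z $ j))"

definition zgroup :: "(int^'m) set \<Rightarrow> (int^'m) set" where
  "zgroup S = {\<Sum>v\<in>S. k v *s v | k :: int^'m \<Rightarrow> int. True}"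

definition nsemigroup :: "(int^'m) set \<Rightarrow> (int^'m) set" where
  "nsemigroup S = {\<Sum>v\<in>S. int (k v) *s v | k :: int^'m \<Rightarrow> nat. True}"

definition rcone :: "(int^'m) set \<Rightarrow> (real^'m) set" where
  "rcone S = {\<Sum>v\<in>S. c v *s rvec v | c :: int^'m \<Rightarrow> real. \<forall>v\<in>S. c v \<ge> 0}"

definition lattice_pts :: "(int^'m) set \<Rightarrow> (int^'m) set" where
  "lattice_pts S = {z. rvec z \<in> rcone S}"

text \<open>int(NM) = Z^m intersected with the topological interior of R_{>=0} M.\<close>
definition int_pts :: "(int^'m) set \<Rightarrow> (int^'m) set" where
  "int_pts S = {z. rvec z \<in> interior (rcone S)}"

text \<open>The homogenization (1, x) of a vector x in Z^d, as a vector indexed by 'd option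
  (None is the new first coordinate).\<close>
definition homog :: "int^'d \<Rightarrow> int^('d option)" where
  "homog x = (\<chi> j. case j of None \<Rightarrow> 1 | Some i \<Rightarrow> x $ i)"

end

theory Submission
  imports Defs
begin

lemma gen_repr:
  fixes h :: "'c::comm_monoid_add \<Rightarrow> 'v \<Rightarrow> 'w::comm_monoid_add" and g :: "'i \<Rightarrow> 'v"
  assumes fin: "finite I" and h0: "\<And>v. h 0 v = 0" and hadd: "\<And>a b v. h (a+b) v = h a v + h b v"
    and P0: "P 0" and Padd: "\<And>a b. P a \<Longrightarrow> P b \<Longrightarrow> P (a+b)"
  shows "(\<exists>k. (\<forall>v\<in>g`I. P (k v)) \<and> x = (\<Sum>v\<in>g`I. h (k v) v))
     \<longleftrightarrow> (\<exists>k. (\<forall>i\<in>I. P (k i)) \<and> x = (\<Sum>i\<in>I. h (k i) (g i)))"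
proof
  assume "\<exists>k. (\<forall>v\<in>g`I. P (k v)) \<and> x = (\<Sum>v\<in>g`I. h (k v) v)"
  then obtain k where kP: "\<forall>v\<in>g`I. P (k v)" and x: "x = (\<Sum>v\<in>g`I. h (k v) v)" by blast
  define k' where "k' i = (if i = inv_into I g (g i) then k (g i) else 0)" for i
  have "\<forall>i\<in>I. P (k' i)" using kP P0 by (auto simp: k'_def)
  moreover have "(\<Sum>i\<in>I. h (k' i) (g i)) = (\<Sum>v\<in>g`I. h (k v) v)"
  proof -
    have "(\<Sum>i\<in>I. h (k' i) (g i)) = (\<Sum>v\<in>g`I. \<Sum>i\<in>{i\<in>I. g i = v}. h (k' i) (g i))"
      by (rule sum.image_gen[OF fin])
    also have "\<dots> = (\<Sum>v\<in>g`I. h (k v) v)"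
    proof (rule sum.cong[OF refl])
      fix v assume v: "v \<in> g`I"
      let ?j = "inv_into I g v"
      have j: "?j \<in> {i\<in>I. g i = v}" using v by (auto intro: inv_into_into f_inv_into_f)
      have "(\<Sum>i\<in>{i\<in>I. g i = v}. h (k' i) (g i)) = (\<Sum>i\<in>{i\<in>I. g i = v}. if i = ?j then h (k v) v else 0)"
        by (rule sum.cong) (auto simp: k'_def h0)
      also have "\<dots> = h (k v) v" using j fin by (simp add: sum.delta')
      finally show "(\<Sum>i\<in>{i\<in>I. g i = v}. h (k' i) (g i)) = h (k v) v" .
    qed
    finally show ?thesis .
  qed
  ultimately show "\<exists>k. (\<forall>i\<in>I. P (k i)) \<and> x = (\<Sum>i\<in>I. h (k i) (g i))" using x by (intro exI[of _ k']) simp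
next
  assume "\<exists>k. (\<forall>i\<in>I. P (k i)) \<and> x = (\<Sum>i\<in>I. h (k i) (g i))"
  then obtain k where kP: "\<forall>i\<in>I. P (k i)" and x: "x = (\<Sum>i\<in>I. h (k i) (g i))" by blast
  define k' where "k' v = (\<Sum>i\<in>{i\<in>I. g i = v}. k i)" for v
  have Psum: "finite A \<Longrightarrow> (\<forall>i\<in>A. P (f i)) \<longrightarrow> P (sum f A)" for A and f :: "'i \<Rightarrow> 'c"
    by (induction A rule: finite_induct) (auto simp: P0 Padd)
  have hsum: "finite A \<Longrightarrow> h (sum f A) v = (\<Sum>i\<in>A. h (f i) v)" for A and f :: "'i \<Rightarrow> 'c" and v
    by (induction A rule: finite_induct) (auto simp: h0 hadd)
  have "\<forall>v\<in>g`I. P (k' v)" using Psum kP fin by (auto simp: k'_def)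
  moreover have "(\<Sum>v\<in>g`I. h (k' v) v) = (\<Sum>i\<in>I. h (k i) (g i))"
  proof -
    have "(\<Sum>v\<in>g`I. h (k' v) v) = (\<Sum>v\<in>g`I. \<Sum>i\<in>{i\<in>I. g i = v}. h (k i) (g i))"
    proof (rule sum.cong[OF refl])
      fix v assume "v \<in> g ` I"
      have "h (k' v) v = (\<Sum>i\<in>{i\<in>I. g i = v}. h (k i) v)" unfolding k'_def using fin by (simp add: hsum)
      also have "\<dots> = (\<Sum>i\<in>{i\<in>I. g i = v}. h (k i) (g i))" by (rule sum.cong) auto
      finally show "h (k' v) v = (\<Sum>i\<in>{i\<in>I. g i = v}. h (k i) (g i))" .
    qed
    also have "\<dots> = (\<Sum>i\<in>I. h (k i) (g i))" by (rule sum.image_gen[OF fin, symmetric])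
    finally show ?thesis .
  qed
  ultimately show "\<exists>k. (\<forall>v\<in>g`I. P (k v)) \<and> x = (\<Sum>v\<in>g`I. h (k v) v)" using x by (intro exI[of _ k']) simp
qed

lemma zgroup_rep:
  fixes g :: "'i \<Rightarrow> int^'m"
  assumes "finite I"
  shows "zgroup (g ` I) = {\<Sum>i\<in>I. k i *s g i | k. True}"
proof -
  have "x \<in> zgroup (g ` I) \<longleftrightarrow> x \<in> {\<Sum>i\<in>I. k i *s g i | k. True}" for x
  proof -
    have "x \<in> zgroup (g ` I) \<longleftrightarrow> (\<exists>k. (\<forall>v\<in>g`I. True) \<and> x = (\<Sum>v\<in>g`I. k v *s v))"
      by (auto simp: zgroup_def)
    also have "\<dots> \<longleftrightarrow> (\<exists>k. (\<forall>i\<in>I. True) \<and> x = (\<Sum>i\<in>I. k i *s g i))"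
      by (rule gen_repr[OF assms]) (simp_all add: vector_sadd_rdistrib)
    finally show ?thesis by auto
  qed
  then show ?thesis by blast
qed

lemma nsemi_rep:
  fixes g :: "'i \<Rightarrow> int^'m"
  assumes "finite I"
  shows "nsemigroup (g ` I) = {\<Sum>i\<in>I. int (k i) *s g i | k. True}"
proof -
  have "x \<in> nsemigroup (g ` I) \<longleftrightarrow> x \<in> {\<Sum>i\<in>I. int (k i) *s g i | k. True}" for x
  proof -
    have "x \<in> nsemigroup (g ` I) \<longleftrightarrow> (\<exists>k. (\<forall>v\<in>g`I. True) \<and> x = (\<Sum>v\<in>g`I. int (k v) *s v))"
      by (auto simp: nsemigroup_def)
    also have "\<dots> \<longleftrightarrow> (\<exists>k. (\<forall>i\<in>I. True) \<and> x = (\<Sum>i\<in>I. int (k i) *s g i))"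
      by (rule gen_repr[OF assms]) (simp_all add: vector_sadd_rdistrib)
    finally show ?thesis by auto
  qed
  then show ?thesis by blast
qed

lemma rcone_rep:
  fixes g :: "'i \<Rightarrow> int^'m"
  assumes "finite I"
  shows "rcone (g ` I) = {\<Sum>i\<in>I. c i *\<^sub>R rvec (g i) | c. \<forall>i\<in>I. c i \<ge> 0}"
proof -
  have "x \<in> rcone (g ` I) \<longleftrightarrow> x \<in> {\<Sum>i\<in>I. c i *\<^sub>R rvec (g i) | c. \<forall>i\<in>I. c i \<ge> 0}" for x
  proof -
    have "x \<in> rcone (g ` I) \<longleftrightarrow> (\<exists>k. (\<forall>v\<in>g`I. k v \<ge> 0) \<and> x = (\<Sum>v\<in>g`I. k v *\<^sub>R rvec v))"
      by (auto simp: rcone_def scalar_mult_eq_scaleR)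
    also have "\<dots> \<longleftrightarrow> (\<exists>k. (\<forall>i\<in>I. k i \<ge> 0) \<and> x = (\<Sum>i\<in>I. k i *\<^sub>R rvec (g i)))"
      by (rule gen_repr[OF assms]) (simp_all add: scaleR_add_left)
    finally show ?thesis by auto
  qed
  then show ?thesis by blast
qed


definition piZ :: "int^'d \<Rightarrow> int^('d option) \<Rightarrow> int^'d" where
  "piZ w z = (\<chi> j. z $ Some j - z $ None * w $ j)"
definition piR :: "real^'d \<Rightarrow> real^('d option) \<Rightarrow> real^'d" where
  "piR w x = (\<chi> j. x $ Some j - x $ None * w $ j)"
definition liftZ :: "int^'d \<Rightarrow> int^'d \<Rightarrow> int \<Rightarrow> int^('d option)" where
  "liftZ w y t = (\<chi> j. case j of None \<Rightarrow> t | Some i \<Rightarrow> y $ i + t * w $ i)"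

lemma rvec_nth[simp]: "rvec z $ j = real_of_int (z $ j)"
  by (simp add: rvec_def)
lemma rvec_add: "rvec (x + y) = rvec x + rvec y"
  by (simp add: vec_eq_iff)
lemma rvec_diff: "rvec (x - y) = rvec x - rvec y"
  by (simp add: vec_eq_iff)
lemma rvec_zero[simp]: "rvec 0 = 0"
  by (simp add: vec_eq_iff)
lemma rvec_smult: "rvec (k *s x) = of_int k *\<^sub>R rvec x"
  by (simp add: vec_eq_iff)
lemma rvec_sum: "rvec (sum f A) = (\<Sum>i\<in>A. rvec (f i))"
  by (simp add: vec_eq_iff)
lemma homog_None[simp]: "homog x $ None = 1"
  by (simp add: homog_def)
lemma homog_Some[simp]: "homog x $ Some i = x $ i"
  by (simp add: homog_def)
lemma piZ_add: "piZ w (x + y) = piZ w x + piZ w y"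
  by (simp add: vec_eq_iff piZ_def algebra_simps)
lemma piZ_smult: "piZ w (k *s x) = k *s piZ w x"
  by (simp add: vec_eq_iff piZ_def algebra_simps)
lemma piZ_sum: "piZ w (sum f A) = (\<Sum>i\<in>A. piZ w (f i))"
  by (simp add: vec_eq_iff piZ_def sum_subtractf sum_distrib_right)
lemma piZ_homog: "piZ w (homog x) = x - w"
  by (simp add: vec_eq_iff piZ_def)
lemma piZ_liftZ: "piZ w (liftZ w y t) = y"
  by (simp add: vec_eq_iff piZ_def liftZ_def)
lemma liftZ_None[simp]: "liftZ w y t $ None = t"
  by (simp add: liftZ_def)
lemma rvec_piZ: "rvec (piZ w z) = piR (rvec w) (rvec z)"
  by (simp add: vec_eq_iff piZ_def piR_def)
lemma linear_piR: "linear (piR w)"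
  by (rule linearI) (simp_all add: vec_eq_iff piR_def algebra_simps)
lemma surj_piR: "surj (piR w)"
proof -
  have "piR w (\<chi> j. case j of None \<Rightarrow> 0 | Some i \<Rightarrow> y $ i) = y" for y
    by (simp add: vec_eq_iff piR_def)
  then show ?thesis unfolding surj_def by metis
qed
lemma piR_unique:
  assumes "piR w x = piR w x'" "x $ None = x' $ None"
  shows "x = x'"
proof -
  have "x $ Some i = x' $ Some i" for i
    using assms by (auto simp: vec_eq_iff piR_def)
  then show ?thesis using assms(2) by (simp add: vec_eq_iff split: option.splits) (metis option.exhaust)
qed
lemma piR_sum: "piR w (sum f A) = (\<Sum>i\<in>A. piR w (f i))"
  by (rule linear_sum[OF linear_piR])
lemma piR_add: "piR w (x + y) = piR w x + piR w y"
  by (rule linear_add[OF linear_piR])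
lemma piR_scaleR: "piR w (c *\<^sub>R x) = c *\<^sub>R piR w x"
  by (rule linear_scale[OF linear_piR])
lemma piR_homog: "piR (rvec w) (rvec (homog x)) = rvec x - rvec w"
  by (metis piZ_homog rvec_diff rvec_piZ)
lemma piR_interior:
  "piR w ` interior S \<subseteq> interior (piR w ` S)"
proof -
  have "open (piR w ` interior S)"
    by (rule open_surjective_linear_image[OF open_interior linear_piR surj_piR])
  then show ?thesis by (simp add: image_mono interior_maximal interior_subset)
qed


lemma interior_add_mem:
  fixes S :: "'a::real_normed_vector set"
  assumes add: "\<And>x y. x \<in> S \<Longrightarrow> y \<in> S \<Longrightarrow> x + y \<in> S"
    and q: "q \<in> interior S" and p: "p \<in> S"
  shows "q + p \<in> interior S"
proof -
  obtain e where e: "e > 0" "ball q e \<subseteq> S" using q by (meson mem_interior)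
  have "ball (q + p) e \<subseteq> S"
  proof
    fix x assume "x \<in> ball (q + p) e"
    then have "x - p \<in> ball q e" by (simp add: dist_norm algebra_simps)
    then have "x - p \<in> S" using e by blast
    from add[OF this p] show "x \<in> S" by simp
  qed
  then show ?thesis using e by (meson mem_interior)
qed

lemma interior_scale_mem:
  fixes S :: "'a::real_normed_vector set"
  assumes sc: "\<And>x c. x \<in> S \<Longrightarrow> c \<ge> 0 \<Longrightarrow> c *\<^sub>R x \<in> S"
    and w: "w \<in> interior S" and eps: "\<epsilon> > 0"
  shows "\<epsilon> *\<^sub>R w \<in> interior S"
proof -
  obtain e where e: "e > 0" "ball w e \<subseteq> S" using w by (meson mem_interior)
  have "ball (\<epsilon> *\<^sub>R w) (\<epsilon> * e) \<subseteq> S"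
  proof
    fix x assume x: "x \<in> ball (\<epsilon> *\<^sub>R w) (\<epsilon> * e)"
    have "dist w (inverse \<epsilon> *\<^sub>R x) = inverse \<epsilon> * dist (\<epsilon> *\<^sub>R w) x"
    proof -
      have "w - inverse \<epsilon> *\<^sub>R x = inverse \<epsilon> *\<^sub>R (\<epsilon> *\<^sub>R w - x)"
        using eps by (simp add: algebra_simps)
      then show ?thesis using eps by (simp add: dist_norm)
    qed
    also have "\<dots> < inverse \<epsilon> * (\<epsilon> * e)" using x eps by simp
    also have "\<dots> = e" using eps by simp
    finally have "inverse \<epsilon> *\<^sub>R x \<in> S" using e by auto
    from sc[OF this, of \<epsilon>] show "x \<in> S" using eps by simp
  qed
  then show ?thesis using e eps by (meson mem_interior mult_pos_pos)
qed

lemma rcone_add: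
  fixes g :: "'i \<Rightarrow> int^'m"
  assumes fin: "finite I" and "x \<in> rcone (g ` I)" "y \<in> rcone (g ` I)"
  shows "x + y \<in> rcone (g ` I)"
proof -
  obtain c1 where c1: "\<forall>i\<in>I. c1 i \<ge> 0" "x = (\<Sum>i\<in>I. c1 i *\<^sub>R rvec (g i))"
    using assms(2) by (auto simp: rcone_rep[OF fin])
  obtain c2 where c2: "\<forall>i\<in>I. c2 i \<ge> 0" "y = (\<Sum>i\<in>I. c2 i *\<^sub>R rvec (g i))"
    using assms(3) by (auto simp: rcone_rep[OF fin])
  have "x + y = (\<Sum>i\<in>I. (c1 i + c2 i) *\<^sub>R rvec (g i))"
    by (simp add: c1 c2 sum.distrib scaleR_add_left)
  moreover have "\<forall>i\<in>I. c1 i + c2 i \<ge> 0" using c1 c2 by auto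
  ultimately show ?thesis by (auto simp: rcone_rep[OF fin])
qed

lemma rcone_scale:
  fixes g :: "'i \<Rightarrow> int^'m"
  assumes fin: "finite I" and "x \<in> rcone (g ` I)" "c \<ge> 0"
  shows "c *\<^sub>R x \<in> rcone (g ` I)"
proof -
  obtain c1 where c1: "\<forall>i\<in>I. c1 i \<ge> 0" "x = (\<Sum>i\<in>I. c1 i *\<^sub>R rvec (g i))"
    using assms(2) by (auto simp: rcone_rep[OF fin])
  have "c *\<^sub>R x = (\<Sum>i\<in>I. (c * c1 i) *\<^sub>R rvec (g i))"
    by (simp add: c1 scaleR_sum_right)
  moreover have "\<forall>i\<in>I. c * c1 i \<ge> 0" using c1 assms(3) by auto
  ultimately show ?thesis by (auto simp: rcone_rep[OF fin])
qed

lemma rcone_gen: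
  fixes g :: "'i \<Rightarrow> int^'m"
  assumes fin: "finite I" and u: "u \<in> I"
  shows "rvec (g u) \<in> rcone (g ` I)"
proof -
  have "rvec (g u) = (\<Sum>i\<in>I. (if i = u then 1 else 0) *\<^sub>R rvec (g i))"
    using fin u by (simp add: if_distrib[of "\<lambda>c. c *\<^sub>R _"] sum.delta' cong: if_cong)
  then show ?thesis by (auto simp: rcone_rep[OF fin])
qed

lemma nsemi_rcone:
  fixes g :: "'i \<Rightarrow> int^'m"
  assumes fin: "finite I" and "z \<in> nsemigroup (g ` I)"
  shows "rvec z \<in> rcone (g ` I)"
proof -
  obtain k where k: "z = (\<Sum>i\<in>I. int (k i) *s g i)" using assms(2) by (auto simp: nsemi_rep[OF fin])
  have "rvec z = (\<Sum>i\<in>I. real (k i) *\<^sub>R rvec (g i))"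
    by (simp add: k rvec_sum rvec_smult)
  then show ?thesis by (auto simp: rcone_rep[OF fin])
qed


lemma drop_u_int:
  fixes a0 :: "nat \<Rightarrow> int^'d"
  assumes "u \<le> n"
  shows "(\<Sum>i\<in>{0..n}. f i *s (a0 i - a0 u)) = (\<Sum>i\<in>{0..n}-{u}. f i *s (a0 i - a0 u))"
  using assms by (simp add: sum.remove[of "{0..n}" u])

lemma drop_u_real:
  fixes a0 :: "nat \<Rightarrow> int^'d"
  assumes "u \<le> n"
  shows "(\<Sum>i\<in>{0..n}. f i *\<^sub>R rvec (a0 i - a0 u)) = (\<Sum>i\<in>{0..n}-{u}. f i *\<^sub>R rvec (a0 i - a0 u))"
  using assms by (simp add: sum.remove[of "{0..n}" u])

lemma piZ_comb:
  "piZ w (\<Sum>i\<in>J. f i *s homog (x i)) = (\<Sum>i\<in>J. f i *s (x i - w))"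
  by (simp add: piZ_sum piZ_smult piZ_homog)

lemma piR_comb:
  "piR (rvec w) (\<Sum>i\<in>J. c i *\<^sub>R rvec (homog (x i))) = (\<Sum>i\<in>J. c i *\<^sub>R rvec (x i - w))"
  by (simp add: piR_sum piR_scaleR piR_homog rvec_diff)

lemma None_comb:
  "(\<Sum>i\<in>J. c i *\<^sub>R rvec (homog (x i))) $ None = (\<Sum>i\<in>J. c i)"
  by simp

theorem lemma3p4:
  fixes a :: "nat \<Rightarrow> int^'d::finite" and n :: nat
  defines "a0 \<equiv> (\<lambda>i. if i = 0 then 0 else a i)"
  assumes hZ: "zgroup ((\<lambda>i. homog (a0 i)) ` {0..n}) = UNIV"
    and hN: "nsemigroup ((\<lambda>i. homog (a0 i)) ` {0..n})
             = lattice_pts ((\<lambda>i. homog (a0 i)) ` {0..n})"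
    and hint: "\<exists>c \<in> nsemigroup ((\<lambda>i. homog (a0 i)) ` {0..n}).
             int_pts ((\<lambda>i. homog (a0 i)) ` {0..n})
             = (\<lambda>x. x + c) ` nsemigroup ((\<lambda>i. homog (a0 i)) ` {0..n})"
    and u: "u \<le> n"
  shows "zgroup ((\<lambda>i. a0 i - a0 u) ` ({0..n} - {u})) = UNIV
       \<and> nsemigroup ((\<lambda>i. a0 i - a0 u) ` ({0..n} - {u}))
           = lattice_pts ((\<lambda>i. a0 i - a0 u) ` ({0..n} - {u}))
       \<and> (\<exists>c \<in> nsemigroup ((\<lambda>i. a0 i - a0 u) ` ({0..n} - {u})).
            int_pts ((\<lambda>i. a0 i - a0 u) ` ({0..n} - {u}))
            = (\<lambda>x. x + c) ` nsemigroup ((\<lambda>i. a0 i - a0 u) ` ({0..n} - {u})))"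
proof -
  let ?H = "(\<lambda>i. homog (a0 i)) ` {0..n}"
  let ?A = "(\<lambda>i. a0 i - a0 u) ` ({0..n} - {u})"
  have fin: "finite {0..n}" "finite ({0..n} - {u})" by auto
  have uI: "u \<in> {0..n}" using u by simp
  have Z: "zgroup ?A = UNIV"
  proof -
    have "y \<in> zgroup ?A" for y
    proof -
      have "liftZ (a0 u) y 0 \<in> zgroup ?H" using hZ by simp
      then obtain k where k: "liftZ (a0 u) y 0 = (\<Sum>i\<in>{0..n}. k i *s homog (a0 i))"
        by (auto simp: zgroup_rep[OF fin(1)])
      have "y = piZ (a0 u) (liftZ (a0 u) y 0)" by (simp add: piZ_liftZ)
      also have "\<dots> = (\<Sum>i\<in>{0..n}-{u}. k i *s (a0 i - a0 u))"
        by (simp only: k piZ_comb drop_u_int[OF u])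
      finally show ?thesis by (auto simp: zgroup_rep[OF fin(2)])
    qed
    then show ?thesis by auto
  qed
  have NA: "nsemigroup ?A = piZ (a0 u) ` nsemigroup ?H"
  proof -
    have "x \<in> nsemigroup ?A \<longleftrightarrow> (\<exists>k. x = (\<Sum>i\<in>{0..n}-{u}. int (k i) *s (a0 i - a0 u)))" for x
      by (auto simp: nsemi_rep[OF fin(2)])
    moreover have "x \<in> piZ (a0 u) ` nsemigroup ?H \<longleftrightarrow> (\<exists>k. x = (\<Sum>i\<in>{0..n}-{u}. int (k i) *s (a0 i - a0 u)))" for x
    proof -
      have eq: "piZ (a0 u) (\<Sum>i\<in>{0..n}. int (k i) *s homog (a0 i)) = (\<Sum>i\<in>{0..n}-{u}. int (k i) *s (a0 i - a0 u))" for k :: "nat \<Rightarrow> nat"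
        unfolding piZ_comb by (rule drop_u_int[OF u])
      have "x \<in> piZ (a0 u) ` nsemigroup ?H \<longleftrightarrow> (\<exists>k. x = piZ (a0 u) (\<Sum>i\<in>{0..n}. int (k i) *s homog (a0 i)))"
        by (auto simp: nsemi_rep[OF fin(1)])
      then show ?thesis by (simp only: eq)
    qed
    ultimately show ?thesis by blast
  qed
  have RA: "rcone ?A = piR (rvec (a0 u)) ` rcone ?H"
  proof
    show "rcone ?A \<subseteq> piR (rvec (a0 u)) ` rcone ?H"
    proof
      fix x assume "x \<in> rcone ?A"
      then obtain c where c: "\<forall>i\<in>{0..n}-{u}. c i \<ge> 0" "x = (\<Sum>i\<in>{0..n}-{u}. c i *\<^sub>R rvec (a0 i - a0 u))"
        by (auto simp: rcone_rep[OF fin(2)])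
      let ?c = "c(u := 0)"
      have M: "(\<Sum>i\<in>{0..n}. ?c i *\<^sub>R rvec (homog (a0 i))) \<in> rcone ?H"
        using c(1) by (auto simp: rcone_rep[OF fin(1)] intro!: exI[of _ ?c])
      have E: "piR (rvec (a0 u)) (\<Sum>i\<in>{0..n}. ?c i *\<^sub>R rvec (homog (a0 i))) = x"
      proof -
        have "piR (rvec (a0 u)) (\<Sum>i\<in>{0..n}. ?c i *\<^sub>R rvec (homog (a0 i))) = (\<Sum>i\<in>{0..n}. ?c i *\<^sub>R rvec (a0 i - a0 u))"
          by (simp only: piR_comb)
        also have "\<dots> = (\<Sum>i\<in>{0..n}-{u}. ?c i *\<^sub>R rvec (a0 i - a0 u))" by (rule drop_u_real[OF u])
        also have "\<dots> = x" unfolding c(2) by (rule sum.cong) auto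
        finally show ?thesis .
      qed
      show "x \<in> piR (rvec (a0 u)) ` rcone ?H" using E M by blast
    qed
  next
    show "piR (rvec (a0 u)) ` rcone ?H \<subseteq> rcone ?A"
    proof
      fix x assume "x \<in> piR (rvec (a0 u)) ` rcone ?H"
      then obtain c where c: "\<forall>i\<in>{0..n}. c i \<ge> 0"
        "x = piR (rvec (a0 u)) (\<Sum>i\<in>{0..n}. c i *\<^sub>R rvec (homog (a0 i)))"
        by (auto simp: rcone_rep[OF fin(1)])
      have "x = (\<Sum>i\<in>{0..n}-{u}. c i *\<^sub>R rvec (a0 i - a0 u))"
        unfolding c(2) piR_comb by (rule drop_u_real[OF u])
      then show "x \<in> rcone ?A" using c(1) by (auto simp: rcone_rep[OF fin(2)])
    qed
  qed
  have N: "nsemigroup ?A = lattice_pts ?A"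
  proof
    show "nsemigroup ?A \<subseteq> lattice_pts ?A"
      using nsemi_rcone[OF fin(2)] by (auto simp: lattice_pts_def)
  next
    show "lattice_pts ?A \<subseteq> nsemigroup ?A"
    proof
      fix y assume "y \<in> lattice_pts ?A"
      then obtain c where c: "\<forall>i\<in>{0..n}-{u}. c i \<ge> 0" "rvec y = (\<Sum>i\<in>{0..n}-{u}. c i *\<^sub>R rvec (a0 i - a0 u))"
        by (auto simp: lattice_pts_def rcone_rep[OF fin(2)])
      define s where "s = (\<Sum>i\<in>{0..n}-{u}. c i)"
      define t where "t = \<lceil>s\<rceil>"
      let ?c = "c(u := of_int t - s)"
      define X where "X = (\<Sum>i\<in>{0..n}. ?c i *\<^sub>R rvec (homog (a0 i)))"
      have "X \<in> rcone ?H"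
      proof -
        have tge: "s \<le> of_int t" by (simp add: t_def)
        show ?thesis using c(1) tge unfolding X_def by (auto simp: rcone_rep[OF fin(1)] intro!: exI[of _ ?c])
      qed
      have "piR (rvec (a0 u)) X = (\<Sum>i\<in>{0..n}-{u}. ?c i *\<^sub>R rvec (a0 i - a0 u))"
        unfolding X_def piR_comb by (rule drop_u_real[OF u])
      also have "\<dots> = rvec y" unfolding c(2) by (rule sum.cong) auto
      finally have p1: "piR (rvec (a0 u)) X = rvec y" .
      have "X $ None = (\<Sum>i\<in>{0..n}. ?c i)" unfolding X_def by (rule None_comb)
      also have "\<dots> = ?c u + (\<Sum>i\<in>{0..n}-{u}. ?c i)" by (rule sum.remove[OF fin(1) uI])
      also have "(\<Sum>i\<in>{0..n}-{u}. ?c i) = s" unfolding s_def by (rule sum.cong) auto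
      finally have p2: "X $ None = of_int t" by simp
      have "rvec (liftZ (a0 u) y t) = X"
        by (rule piR_unique[of "rvec (a0 u)"]) (simp_all add: p1 p2 flip: rvec_piZ add: piZ_liftZ)
      then have "liftZ (a0 u) y t \<in> nsemigroup ?H"
        using hN \<open>X \<in> rcone ?H\<close> by (simp add: lattice_pts_def)
      then have "piZ (a0 u) (liftZ (a0 u) y t) \<in> nsemigroup ?A" unfolding NA by (rule imageI)
      then show "y \<in> nsemigroup ?A" by (simp add: piZ_liftZ)
    qed
  qed
  obtain ct where ct: "ct \<in> nsemigroup ?H" "int_pts ?H = (\<lambda>x. x + ct) ` nsemigroup ?H"
    using hint by blast
  have zeroH: "0 \<in> nsemigroup ?H"
    unfolding nsemi_rep[OF fin(1)] mem_Collect_eq by (intro exI[of _ "\<lambda>_. 0"]) simp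
  have W: "rvec ct \<in> interior (rcone ?H)"
  proof -
    have "ct \<in> int_pts ?H" using ct zeroH by (metis add_0 image_eqI)
    then show ?thesis by (simp add: int_pts_def)
  qed
  have addH: "\<And>x y. x \<in> rcone ?H \<Longrightarrow> y \<in> rcone ?H \<Longrightarrow> x + y \<in> rcone ?H"
    by (rule rcone_add[OF fin(1)])
  have scH: "\<And>x c. x \<in> rcone ?H \<Longrightarrow> c \<ge> 0 \<Longrightarrow> c *\<^sub>R x \<in> rcone ?H"
    by (rule rcone_scale[OF fin(1)])
  have I3: "int_pts ?A = (\<lambda>x. x + piZ (a0 u) ct) ` nsemigroup ?A"
  proof
    show "int_pts ?A \<subseteq> (\<lambda>x. x + piZ (a0 u) ct) ` nsemigroup ?A"
    proof
      fix y assume "y \<in> int_pts ?A"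
      then have "rvec y \<in> interior (rcone ?A)" by (simp add: int_pts_def)
      then obtain e where e: "e > 0" "ball (rvec y) e \<subseteq> rcone ?A" by (meson mem_interior)
      define v where "v = piR (rvec (a0 u)) (rvec ct)"
      define \<epsilon> where "\<epsilon> = e / (norm v + 1)"
      have nv: "norm v + 1 > 0" using norm_ge_zero[of v] by linarith
      have epos: "\<epsilon> > 0" using e(1) nv unfolding \<epsilon>_def by (intro divide_pos_pos) simp_all
      have "\<epsilon> * norm v < e"
      proof -
        have "\<epsilon> * norm v = e * (norm v / (norm v + 1))" by (simp add: \<epsilon>_def)
        also have "\<dots> < e * 1" using e nv by (intro mult_strict_left_mono) simp_all
        finally show ?thesis by simp
      qed
      then have B: "rvec y - \<epsilon> *\<^sub>R v \<in> ball (rvec y) e" using epos by (simp add: dist_norm)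
      have "rvec y - \<epsilon> *\<^sub>R v \<in> rcone ?A" by (rule subsetD[OF e(2) B])
      then have "rvec y - \<epsilon> *\<^sub>R v \<in> piR (rvec (a0 u)) ` rcone ?H" by (subst RA[symmetric])
      then obtain p where p': "rvec y - \<epsilon> *\<^sub>R v = piR (rvec (a0 u)) p" "p \<in> rcone ?H" by (rule imageE)
      note p = p'(2) p'(1)[symmetric]
      define q where "q = \<epsilon> *\<^sub>R rvec ct + p"
      have q: "q \<in> interior (rcone ?H)" unfolding q_def
        by (rule interior_add_mem[OF addH interior_scale_mem[OF scH W epos] p(1)])
      have pq: "piR (rvec (a0 u)) q = rvec y"
        by (simp add: q_def piR_add piR_scaleR p(2) v_def[symmetric])
      define t where "t = \<lceil>q $ None\<rceil>"
      define \<delta> :: real where "\<delta> = real_of_int t - q $ None"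
      define Z where "Z = q + \<delta> *\<^sub>R rvec (homog (a0 u))"
      have tq: "q $ None \<le> real_of_int t" unfolding t_def by (rule le_of_int_ceiling)
      have dpos: "\<delta> \<ge> 0" using tq unfolding \<delta>_def by linarith
      have hu: "rvec (homog (a0 u)) \<in> rcone ?H" using rcone_gen[OF fin(1) uI, of "\<lambda>i. homog (a0 i)"] by simp
      have Zi: "Z \<in> interior (rcone ?H)" unfolding Z_def
        by (rule interior_add_mem[OF addH q scH[OF hu dpos]])
      have "piR (rvec (a0 u)) Z = rvec y"
        by (simp add: Z_def piR_add piR_scaleR pq piR_homog)
      moreover have "Z $ None = of_int t" by (simp add: Z_def \<delta>_def)
      ultimately have "rvec (liftZ (a0 u) y t) = Z"
        by (intro piR_unique[of "rvec (a0 u)"]) (simp_all flip: rvec_piZ add: piZ_liftZ)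
      then have "liftZ (a0 u) y t \<in> int_pts ?H" using Zi by (simp add: int_pts_def)
      then have "liftZ (a0 u) y t \<in> (\<lambda>x. x + ct) ` nsemigroup ?H" by (simp only: ct(2))
      then obtain xt where xt': "liftZ (a0 u) y t = xt + ct" "xt \<in> nsemigroup ?H" by (rule imageE)
      note xt = xt'(2) xt'(1)
      have "y = piZ (a0 u) xt + piZ (a0 u) ct"
        by (metis xt(2) piZ_liftZ piZ_add)
      moreover have "piZ (a0 u) xt \<in> nsemigroup ?A" unfolding NA by (rule imageI[OF xt(1)])
      ultimately show "y \<in> (\<lambda>x. x + piZ (a0 u) ct) ` nsemigroup ?A" by (rule image_eqI)
    qed
  next
    show "(\<lambda>x. x + piZ (a0 u) ct) ` nsemigroup ?A \<subseteq> int_pts ?A"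
    proof
      fix y assume "y \<in> (\<lambda>x. x + piZ (a0 u) ct) ` nsemigroup ?A"
      then obtain x where x': "y = x + piZ (a0 u) ct" "x \<in> nsemigroup ?A" by (rule imageE)
      note x = x'(2) x'(1)
      from x(1) have "x \<in> piZ (a0 u) ` nsemigroup ?H" by (simp only: NA)
      then obtain xt where xt': "x = piZ (a0 u) xt" "xt \<in> nsemigroup ?H" by (rule imageE)
      note xt = xt'(2) xt'(1)
      have "xt + ct \<in> int_pts ?H" unfolding ct(2) by (rule imageI[OF xt(1)])
      then have "rvec (xt + ct) \<in> interior (rcone ?H)" by (simp add: int_pts_def)
      have PI: "piR (rvec (a0 u)) ` interior (rcone ?H) \<subseteq> interior (rcone ?A)"
        using piR_interior[of "rvec (a0 u)" "rcone ?H"] unfolding RA[symmetric] .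
      from subsetD[OF PI imageI[OF \<open>rvec (xt + ct) \<in> interior (rcone ?H)\<close>]]
      have "piR (rvec (a0 u)) (rvec (xt + ct)) \<in> interior (rcone ?A)" .
      moreover have "rvec y = piR (rvec (a0 u)) (rvec (xt + ct))"
        by (simp add: x(2) xt(2) piZ_add flip: rvec_piZ)
      ultimately show "y \<in> int_pts ?A" by (simp add: int_pts_def)
    qed
  qed
  have "piZ (a0 u) ct \<in> nsemigroup ?A" unfolding NA by (rule imageI[OF ct(1)])
  with Z N I3 show ?thesis by blast
qed

end
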